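(* Let $n>4$. In any sparse ordering $\sigma$ of $U_n$, the position of $v_1$ is $1$ or $2$ and the position of $v_n$ is $n$ or $n-1$. Furthermore, for no $i\in[n-1]$ is $v_i$ immediately followed by $v_{i+1}$ in $\sigma$.
   Context: For $n\ge1$, $U_n$ is the tournament with vertex set $\{v_1,\dots,v_n\}$ and arc set $\{(v_{i+1},v_i): i\in[n-1]\}\cup\{(v_i,v_j): 1\le i<n,\ i+1<j\le n\}$. For an ordering of the vertices, an arc $(x,y)$ is backward if $y$ comes before $x$. An ordering is sparse if every vertex is incident to at most one backward arc. Positions in an ordering are numbered $1,\dots,n$. *)

theory Defs
  imports Main
begin

text \<open>Vertex v_i of U_n is represented by the natural number i, 1 \<le> i \<le> n.\<close>

definition U_arc :: "nat \<Rightarrow> nat \<Rightarrow> nat \<Rightarrow> bool" where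
  "U_arc n x y \<longleftrightarrow>
     (\<exists>i. 1 \<le> i \<and> i \<le> n - 1 \<and> x = i + 1 \<and> y = i) \<or>
     (1 \<le> x \<and> x < n \<and> x + 1 < y \<and> y \<le> n)"

text \<open>An ordering of the vertices is a bijection pos from {1..n} to positions {1..n}.\<close>

definition is_ordering :: "nat \<Rightarrow> (nat \<Rightarrow> nat) \<Rightarrow> bool" where
  "is_ordering n pos \<longleftrightarrow> bij_betw pos {1..n} {1..n}"

definition backward_arcs :: "nat \<Rightarrow> (nat \<Rightarrow> nat) \<Rightarrow> (nat \<times> nat) set" where
  "backward_arcs n pos = {(x, y). x \<in> {1..n} \<and> y \<in> {1..n} \<and> U_arc n x y \<and> pos y < pos x}"

definition sparse_ordering :: "nat \<Rightarrow> (nat \<Rightarrow> nat) \<Rightarrow> bool" where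
  "sparse_ordering n pos \<longleftrightarrow> is_ordering n pos \<and>
     (\<forall>v \<in> {1..n}. card {(x, y) \<in> backward_arcs n pos. x = v \<or> y = v} \<le> 1)"

end

theory Submission
  imports Defs
begin

lemma two_bw:
  assumes sp: "sparse_ordering n pos" and v: "v \<in> {1..n}"
    and a: "(a,b) \<in> backward_arcs n pos" and c: "(c,d) \<in> backward_arcs n pos"
    and ne: "(a,b) \<noteq> (c,d)" and va: "a = v \<or> b = v" and vc: "c = v \<or> d = v"
  shows False
proof -
  let ?S = "{(x, y) \<in> backward_arcs n pos. x = v \<or> y = v}"
  have "?S \<subseteq> {1..n} \<times> {1..n}" unfolding backward_arcs_def by auto
  hence fin: "finite ?S" by (rule finite_subset) auto
  have "{(a,b),(c,d)} \<subseteq> ?S" using a c va vc by auto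
  hence "card {(a,b),(c,d)} \<le> card ?S" using fin by (rule card_mono[rotated])
  moreover have "card {(a,b),(c,d)} = 2" using ne by simp
  moreover have "card ?S \<le> 1" using sp v unfolding sparse_ordering_def by blast
  ultimately show False by simp
qed

lemma bwA:
  assumes "1 \<le> i" "i + 1 \<le> n" "pos i < pos (i+1)"
  shows "(i+1, i) \<in> backward_arcs n pos"
  using assms unfolding backward_arcs_def U_arc_def by auto

lemma bwB:
  assumes "1 \<le> x" "x + 1 < y" "y \<le> n" "pos y < pos x"
  shows "(x, y) \<in> backward_arcs n pos"
  using assms unfolding backward_arcs_def U_arc_def by auto

theorem mainTheorem11:
  fixes n :: nat and pos :: "nat \<Rightarrow> nat"
  assumes "n > 4" and "sparse_ordering n pos"
  shows "(pos 1 = 1 \<or> pos 1 = 2) \<and> (pos n = n \<or> pos n = n - 1) \<and>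
         (\<forall>i \<in> {1..n-1}. pos (i + 1) \<noteq> pos i + 1)"
proof -
  note sp = assms(2)
  have bij: "bij_betw pos {1..n} {1..n}" using sp unfolding sparse_ordering_def is_ordering_def by blast
  have inj: "\<And>x y. x \<in> {1..n} \<Longrightarrow> y \<in> {1..n} \<Longrightarrow> pos x = pos y \<Longrightarrow> x = y"
    using bij unfolding bij_betw_def inj_on_def by blast
  have rng: "\<And>x. x \<in> {1..n} \<Longrightarrow> pos x \<in> {1..n}" using bij unfolding bij_betw_def by blast
  have sur: "\<And>k. k \<in> {1..n} \<Longrightarrow> \<exists>x\<in>{1..n}. pos x = k" by (metis bij bij_betw_def imageE)
  have vs: "n - 1 \<in> {1..n}" "n - 2 \<in> {1..n}" "n - 3 \<in> {1..n}" "n \<in> {1..n}" "(1::nat) \<in> {1..n}" "(3::nat) \<in> {1..n}" "(4::nat) \<in> {1..n}" using assms(1) by auto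
  have C1: "pos 1 = 1 \<or> pos 1 = 2"
  proof (rule ccontr)
    assume H: "\<not> ?thesis"
    have p1: "pos 1 \<ge> 3" using H rng[of 1] assms(1) by auto
    obtain a where a: "a \<in> {1..n}" "pos a = 1" using sur[of 1] assms(1) by auto
    obtain b where b: "b \<in> {1..n}" "pos b = 2" using sur[of 2] assms(1) by auto
    have "a \<noteq> 1" "b \<noteq> 1" "a \<noteq> b" using a b p1 by auto
    have "\<exists>j. j \<in> {3..n} \<and> pos j \<le> 2 \<and> pos 2 \<le> 2 \<and> pos j \<noteq> pos 2"
    proof (cases "a = 2 \<or> b = 2")
      case True
      then show ?thesis
      proof
        assume "a = 2"
        thus ?thesis using a b \<open>b \<noteq> 1\<close> \<open>a \<noteq> b\<close> by (intro exI[of _ b]) auto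
      next
        assume "b = 2"
        thus ?thesis using a b \<open>a \<noteq> 1\<close> \<open>a \<noteq> b\<close> by (intro exI[of _ a]) auto
      qed
    next
      case False
      hence "a \<ge> 3" "b \<ge> 3" using a b \<open>a \<noteq> 1\<close> \<open>b \<noteq> 1\<close> by auto
      hence "(1,a) \<in> backward_arcs n pos" "(1,b) \<in> backward_arcs n pos"
        using bwB[of 1 a n pos] bwB[of 1 b n pos] a b p1 by auto
      hence False using \<open>a \<noteq> b\<close> assms(1) assms(1) by (intro two_bw[OF sp, of 1 1 a 1 b]) auto
      thus ?thesis ..
    qed
    then obtain j where j: "j \<in> {3..n}" "pos j \<le> 2" "pos 2 \<le> 2" "pos j \<noteq> pos 2" by blast
    have pj: "pos j \<ge> 1" "pos 2 \<ge> 1" using rng[of j] rng[of 2] j assms(1) by auto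
    have oth: "pos x \<ge> 3" if "x \<in> {1..n}" "x \<noteq> 2" "x \<noteq> j" for x
    proof (rule ccontr)
      assume "\<not> pos x \<ge> 3"
      hence "pos x = pos 2 \<or> pos x = pos j" using rng[OF that(1)] j pj by auto
      thus False using inj[OF that(1), of 2] inj[OF that(1), of j] that j assms(1) by auto
    qed
    have b1: "(1,j) \<in> backward_arcs n pos" using bwB[of 1 j n pos] j p1 by auto
    show False
    proof (cases "j = 3")
      case True
      show False
      proof (cases "pos 2 < pos 3")
        case T2: True
        have "(3,2) \<in> backward_arcs n pos" using bwA[of 2 n pos] T2 assms(1) by auto
        thus False using b1 True assms(1) assms(1) by (intro two_bw[OF sp, of 3 1 3 3 2]) auto
      next
        case F2: False
        hence "pos 3 < pos 4" using oth[of 4] True j pj assms(1) by auto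
        hence "(4,3) \<in> backward_arcs n pos" using bwA[of 3 n pos] assms(1) by auto
        thus False using b1 True assms(1) assms(1) by (intro two_bw[OF sp, of 3 1 3 4 3]) auto
      qed
    next
      case F3: False
      have "\<not> pos j < pos 2"
      proof
        assume "pos j < pos 2"
        hence "(2,j) \<in> backward_arcs n pos" using bwB[of 2 j n pos] j F3 by auto
        thus False using b1 j assms(1) by (intro two_bw[OF sp, of j 1 j 2 j]) auto
      qed
      hence pp: "pos 2 = 1" "pos j = 2" using j pj by auto
      have "(3,2) \<in> backward_arcs n pos" using bwA[of 2 n pos] pp oth[of 3] F3 assms(1) by auto
      show False
      proof (cases "j = 4")
        case True
        have "(5,4) \<in> backward_arcs n pos" using bwA[of 4 n pos] pp oth[of 5] True assms(1) by auto
        thus False using b1 True assms(1) assms(1) by (intro two_bw[OF sp, of 4 1 4 5 4]) auto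
      next
        case False
        have "(3,j) \<in> backward_arcs n pos" using bwB[of 3 j n pos] pp oth[of 3] F3 False j assms(1) by auto
        thus False using \<open>(3,2) \<in> backward_arcs n pos\<close> assms(1) j assms(1) by (intro two_bw[OF sp, of 3 3 2 3 j]) auto
      qed
    qed
  qed
  have eqs: "n-4+1 = n-3" "n-3+1=n-2" "n-2+1=n-1" "n-1+1 = n" using assms(1) by auto
  have C2: "pos n = n \<or> pos n = n - 1"
  proof (rule ccontr)
    assume H: "\<not> ?thesis"
    have p1: "pos n \<le> n - 2" using H rng[of n] assms(1) by auto
    obtain a where a: "a \<in> {1..n}" "pos a = n" using sur[of n] assms(1) by auto
    obtain b where b: "b \<in> {1..n}" "pos b = n - 1" using sur[of "n-1"] assms(1) by fastforce
    have "a \<noteq> n" "b \<noteq> n" "a \<noteq> b" using a b p1 assms(1) by auto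
    have "\<exists>j. j \<in> {1..n-2} \<and> pos j \<ge> n - 1 \<and> pos (n-1) \<ge> n - 1 \<and> pos j \<noteq> pos (n-1)"
    proof (cases "a = n - 1 \<or> b = n - 1")
      case True
      then show ?thesis
      proof
        assume "a = n - 1"
        thus ?thesis using a b \<open>b \<noteq> n\<close> \<open>a \<noteq> b\<close> by (intro exI[of _ b]) auto
      next
        assume "b = n - 1"
        thus ?thesis using a b \<open>a \<noteq> n\<close> \<open>a \<noteq> b\<close> by (intro exI[of _ a]) auto
      qed
    next
      case False
      hence "a \<le> n - 2" "b \<le> n - 2" using a b \<open>a \<noteq> n\<close> \<open>b \<noteq> n\<close> by auto
      hence "(a,n) \<in> backward_arcs n pos" "(b,n) \<in> backward_arcs n pos"
        using bwB[of a n n pos] bwB[of b n n pos] a b p1 assms(1) by auto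
      hence False using \<open>a \<noteq> b\<close> assms(1) assms(1) by (intro two_bw[OF sp, of n a n b n]) auto
      thus ?thesis ..
    qed
    then obtain j where j: "j \<in> {1..n-2}" "pos j \<ge> n - 1" "pos (n-1) \<ge> n - 1" "pos j \<noteq> pos (n-1)" by blast
    have pj: "pos j \<le> n" "pos (n-1) \<le> n" using rng[of j] rng[of "n-1"] j assms(1) by auto
    have oth: "pos x \<le> n - 2" if "x \<in> {1..n}" "x \<noteq> n - 1" "x \<noteq> j" for x
    proof (rule ccontr)
      assume "\<not> pos x \<le> n - 2"
      hence "pos x = pos (n-1) \<or> pos x = pos j" using rng[OF that(1)] j pj by auto
      moreover have "n - 1 \<in> {1..n}" "j \<in> {1..n}" using j assms(1) by auto
      ultimately show False using inj[OF that(1), of "n-1"] inj[OF that(1), of j] that by blast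
    qed
    have b1: "(j,n) \<in> backward_arcs n pos" using bwB[of j n n pos] j p1 assms(1) by auto
    show False
    proof (cases "j = n - 2")
      case True
      show False
      proof (cases "pos (n-2) < pos (n-1)")
        case T2: True
        have "(n-1,n-2) \<in> backward_arcs n pos" using bwA[of "n-2" n pos] T2 assms(1) eqs by auto
        thus False using b1 True assms(1) assms(1) by (intro two_bw[OF sp, of "n-2" j n "n-1" "n-2"]) auto
      next
        case F2: False
        have "pos (n-3) \<le> n - 2" using True assms(1) by (intro oth) auto
        hence "pos (n-3) < pos (n-2)" using F2 True j pj assms(1) by linarith
        hence "(n-2,n-3) \<in> backward_arcs n pos" using bwA[of "n-3" n pos] assms(1) eqs by auto
        thus False using b1 True assms(1) assms(1) by (intro two_bw[OF sp, of "n-2" j n "n-2" "n-3"]) auto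
      qed
    next
      case F3: False
      have "\<not> pos (n-1) < pos j"
      proof
        assume "pos (n-1) < pos j"
        hence "(j,n-1) \<in> backward_arcs n pos" using bwB[of j "n-1" n pos] j F3 by auto
        thus False using b1 j assms(1) assms(1) by (intro two_bw[OF sp, of j j n j "n-1"]) auto
      qed
      hence pp: "pos (n-1) = n" "pos j = n - 1" using j pj by auto
      have q2: "pos (n-2) \<le> n - 2" using F3 assms(1) by (intro oth) auto
      have "pos (n-2) < pos (n-2+1)" using q2 pp eqs assms(1) by (simp only: eqs pp(1)) linarith
      hence bb: "(n-1,n-2) \<in> backward_arcs n pos" using bwA[of "n-2" n pos] assms(1) eqs by simp
      show False
      proof (cases "j = n - 3")
        case True
        have "(n-3,n-4) \<in> backward_arcs n pos" using bwA[of "n-4" n pos] pp oth[of "n-4"] True assms(1) eqs by auto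
        thus False using b1 True assms(1) assms(1) by (intro two_bw[OF sp, of "n-3" j n "n-3" "n-4"]) auto
      next
        case False
        have j': "1 \<le> j" "j \<le> n - 2" using j by auto
        have "(j,n-2) \<in> backward_arcs n pos" by (rule bwB; insert q2 pp F3 False j' assms(1); arith)
        thus False using bb assms(1) j assms(1) by (intro two_bw[OF sp, of "n-2" "n-1" "n-2" j "n-2"]) auto
      qed
    qed
  qed
  have C3: "pos (i + 1) \<noteq> pos i + 1" if i: "i \<in> {1..n-1}" for i
  proof
    assume E: "pos (i + 1) = pos i + 1"
    have b0: "(i+1,i) \<in> backward_arcs n pos" using bwA[of i n pos] E i by auto
    show False
    proof (cases "i + 2 \<le> n")
      case True
      have ne: "pos (i+2) \<noteq> pos (i+1)" "pos (i+2) \<noteq> pos i" using inj[of "i+2" "i+1"] inj[of "i+2" i] True i by auto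
      show False
      proof (cases "pos (i+1) < pos (i+2)")
        case True
        have "(i+2,i+1) \<in> backward_arcs n pos" using bwA[of "i+1" n pos] True \<open>i + 2 \<le> n\<close>
          by (simp add: add.commute)
        thus False using b0 i assms(1) by (intro two_bw[OF sp, of "i+1" "i+1" i "i+2" "i+1"]) auto
      next
        case False
        show False
        proof (cases "pos (i+2) < pos i")
          case True
          have "(i,i+2) \<in> backward_arcs n pos" using bwB[of i "i+2" n pos] True \<open>i + 2 \<le> n\<close> i by auto
          thus False using b0 i assms(1) by (intro two_bw[OF sp, of i "i+1" i i "i+2"]) auto
        next
          case False
          thus False using \<open>\<not> pos (i+1) < pos (i+2)\<close> ne E by auto
        qed
      qed
    next
      case False
      hence ii: "i + 1 = n" "4 \<le> i" using i assms(1) by auto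
      have m: "i - 1 \<in> {1..n}" "i \<in> {1..n}" "i + 1 \<in> {1..n}" "i - 1 \<noteq> i" "i - 1 \<noteq> i + 1"
        using ii by auto
      have ne: "pos (i-1) \<noteq> pos i" "pos (i-1) \<noteq> pos (i+1)"
        using inj[OF m(1) m(2)] inj[OF m(1) m(3)] m(4,5) by blast+
      have im: "i - 1 + 1 = i" using ii by simp
      show False
      proof (cases "pos (i-1) < pos i")
        case True
        hence "pos (i-1) < pos (i-1+1)" by (simp only: im)
        hence "(i-1+1,i-1) \<in> backward_arcs n pos" using ii by (intro bwA) auto
        hence "(i,i-1) \<in> backward_arcs n pos" by (simp only: im)
        thus False using b0 m by (intro two_bw[OF sp, of i "i+1" i i "i-1"]) auto
      next
        case False
        show False
        proof (cases "pos (i+1) < pos (i-1)")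
          case True
          have "(i-1,i+1) \<in> backward_arcs n pos" using True ii by (intro bwB) auto
          thus False using b0 m by (intro two_bw[OF sp, of "i+1" "i+1" i "i-1" "i+1"]) auto
        next
          case False
          thus False using \<open>\<not> pos (i-1) < pos i\<close> ne E by linarith
        qed
      qed
    qed
  qed
  show ?thesis using C1 C2 C3 by blast
qed

end
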